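(* Let $G$ be a connected graph of order $n \ge 2$. Then $\dim_{1,f}(G)=\frac{n}{2}$ if and only if $G \in H[\mathcal{K} \cup \overline{\mathcal{K}}]$ for some connected graph $H$.
   Context: All graphs are finite, simple, undirected and connected. $d(x,y)$ is the length of a shortest $x$–$y$ path in $G$. For a positive integer $k$, $d_k(x,y)=\min\{d(x,y),k+1\}$ and $R_k\{x,y\}=\{z\in V(G): d_k(x,z)\neq d_k(y,z)\}$. For a function $g$ on $V(G)$ and $U\subseteq V(G)$, $g(U)=\sum_{s\in U}g(s)$. A function $h:V(G)\to[0,1]$ is a $k$-truncated resolving function of $G$ if $h(R_k\{x,y\})\ge 1$ for all distinct $x,y\in V(G)$; $\dim_{k,f}(G)$ is the minimum of $h(V(G))$ over all such $h$ (here $k=1$). Let $\mathcal{K}=\{K_a: a\ge 2\}$ (complete graphs) and $\overline{\mathcal{K}}=\{\overline{K}_b: b\ge 2\}$ (edgeless graphs). For a connected graph $H$, $H[\mathcal{K}\cup\overline{\mathcal{K}}]$ is the family of graphs obtained from $H$ by replacing each vertex $u_i\in V(H)$ by a graph $H_i\in\mathcal{K}\cup\overline{\mathcal{K}}$, where each vertex of $H_i$ is adjacent to each vertex of $H_j$ ($i\ne j$) if and only if $u_iu_j\in E(H)$. *)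

theory Defs
  imports Complex_Main
begin

definition simple_graph :: "'a set \<Rightarrow> ('a \<Rightarrow> 'a \<Rightarrow> bool) \<Rightarrow> bool" where
  "simple_graph V E \<longleftrightarrow> finite V \<and> (\<forall>x y. E x y \<longrightarrow> x \<in> V \<and> y \<in> V)
     \<and> (\<forall>x y. E x y \<longrightarrow> E y x) \<and> (\<forall>x. \<not> E x x)"

definition walk_of_len :: "('a \<Rightarrow> 'a \<Rightarrow> bool) \<Rightarrow> 'a \<Rightarrow> 'a \<Rightarrow> nat \<Rightarrow> bool" where
  "walk_of_len E x y n \<longleftrightarrow> (\<exists>xs. length xs = Suc n \<and> hd xs = x \<and> last xs = y
       \<and> (\<forall>i<n. E (xs ! i) (xs ! Suc i)))"

definition connected_graph :: "'a set \<Rightarrow> ('a \<Rightarrow> 'a \<Rightarrow> bool) \<Rightarrow> bool" where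
  "connected_graph V E \<longleftrightarrow> simple_graph V E \<and> V \<noteq> {}
     \<and> (\<forall>x\<in>V. \<forall>y\<in>V. \<exists>n. walk_of_len E x y n)"

definition gdist :: "('a \<Rightarrow> 'a \<Rightarrow> bool) \<Rightarrow> 'a \<Rightarrow> 'a \<Rightarrow> nat" where
  "gdist E x y = (LEAST n. walk_of_len E x y n)"

definition tdist :: "nat \<Rightarrow> ('a \<Rightarrow> 'a \<Rightarrow> bool) \<Rightarrow> 'a \<Rightarrow> 'a \<Rightarrow> nat" where
  "tdist k E x y = min (gdist E x y) (k + 1)"

definition Rk :: "nat \<Rightarrow> 'a set \<Rightarrow> ('a \<Rightarrow> 'a \<Rightarrow> bool) \<Rightarrow> 'a \<Rightarrow> 'a \<Rightarrow> 'a set" where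
  "Rk k V E x y = {z \<in> V. tdist k E x z \<noteq> tdist k E y z}"

definition trunc_resolving_fun :: "nat \<Rightarrow> 'a set \<Rightarrow> ('a \<Rightarrow> 'a \<Rightarrow> bool) \<Rightarrow> ('a \<Rightarrow> real) \<Rightarrow> bool" where
  "trunc_resolving_fun k V E h \<longleftrightarrow> (\<forall>v\<in>V. 0 \<le> h v \<and> h v \<le> 1)
     \<and> (\<forall>x\<in>V. \<forall>y\<in>V. x \<noteq> y \<longrightarrow> sum h (Rk k V E x y) \<ge> 1)"

text \<open>dim_{k,f}(G): minimum (= infimum, the feasible region being a compact polytope) of h(V).\<close>
definition frac_trunc_dim :: "nat \<Rightarrow> 'a set \<Rightarrow> ('a \<Rightarrow> 'a \<Rightarrow> bool) \<Rightarrow> real" where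
  "frac_trunc_dim k V E = Inf {sum h V | h. trunc_resolving_fun k V E h}"

text \<open>G \<in> H[K \<union> co-K] for some connected graph H (vertices of H coded as naturals):
  there is a connected graph H = (W,F) and a map \<pi> from V onto W whose fibres (the H_i) have
  at least two vertices each and are complete or edgeless, and two vertices in different fibres
  are adjacent iff their fibres correspond to adjacent vertices of H.\<close>
definition in_blowup_family :: "'a set \<Rightarrow> ('a \<Rightarrow> 'a \<Rightarrow> bool) \<Rightarrow> bool" where
  "in_blowup_family V E \<longleftrightarrow> (\<exists>(W::nat set) F (\<pi>::'a \<Rightarrow> nat).
     connected_graph W F \<and> \<pi> ` V = W
     \<and> (\<forall>u\<in>W. card {x\<in>V. \<pi> x = u} \<ge> 2
          \<and> ((\<forall>x\<in>V. \<forall>y\<in>V. \<pi> x = u \<and> \<pi> y = u \<and> x \<noteq> y \<longrightarrow> E x y)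
             \<or> (\<forall>x\<in>V. \<forall>y\<in>V. \<pi> x = u \<and> \<pi> y = u \<longrightarrow> \<not> E x y)))
     \<and> (\<forall>x\<in>V. \<forall>y\<in>V. \<pi> x \<noteq> \<pi> y \<longrightarrow> (E x y \<longleftrightarrow> F (\<pi> x) (\<pi> y))))"

end

theory Submission
  imports Defs
begin


lemma walk0: "walk_of_len E x z 0 \<longleftrightarrow> x = z"
proof
  assume "walk_of_len E x z 0"
  then obtain xs where "length xs = 1" "hd xs = x" "last xs = z"
    unfolding walk_of_len_def by auto
  then show "x = z" by (cases xs) auto
next
  assume "x = z" then show "walk_of_len E x z 0"
    unfolding walk_of_len_def by (intro exI[of _ "[x]"]) auto
qed

lemma walk1: "walk_of_len E x z 1 \<longleftrightarrow> E x z"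
proof
  assume "walk_of_len E x z 1"
  then obtain xs where "length xs = Suc (Suc 0)" "hd xs = x" "last xs = z" "\<forall>i<1. E (xs!i) (xs!Suc i)"
    unfolding walk_of_len_def by auto
  then show "E x z"
    by (cases xs; cases "tl xs") auto
next
  assume "E x z" then show "walk_of_len E x z 1"
    unfolding walk_of_len_def by (intro exI[of _ "[x,z]"]) auto
qed

lemma tdist_char:
  assumes "connected_graph V E" "x \<in> V" "z \<in> V"
  shows "tdist 1 E x z = (if x = z then 0 else if E x z then 1 else 2)"
proof -
  obtain n where n: "walk_of_len E x z n" using assms unfolding connected_graph_def by blast
  have L: "walk_of_len E x z (gdist E x z)" unfolding gdist_def by (rule LeastI[of "walk_of_len E x z", OF n])
  show ?thesis
  proof (cases "x = z")
    case True
    then have "gdist E x z = 0" unfolding gdist_def using walk0 by (metis Least_eq_0)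
    then show ?thesis using True by (simp add: tdist_def)
  next
    case False
    then have g0: "gdist E x z \<noteq> 0" using L walk0 by metis
    show ?thesis
    proof (cases "E x z")
      case True
      then have "gdist E x z \<le> 1" unfolding gdist_def using walk1 by (metis Least_le)
      then show ?thesis using g0 True False by (simp add: tdist_def)
    next
      case F: False
      then have "gdist E x z \<noteq> 1" using L walk1 by metis
      then show ?thesis using g0 F False by (simp add: tdist_def)
    qed
  qed
qed

lemma tdist_char1:
  assumes "connected_graph V E" "x \<in> V" "z \<in> V"
  shows "tdist (Suc 0) E x z = (if x = z then 0 else if E x z then 1 else 2)"
  using tdist_char[OF assms] by simp

lemma simpleE:
  assumes "connected_graph V E"
  shows "E x y \<Longrightarrow> x \<in> V \<and> y \<in> V" "E x y \<Longrightarrow> E y x" "\<not> E x x" "finite V"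
  using assms unfolding connected_graph_def simple_graph_def by blast+

lemma Rk_char:
  assumes "connected_graph V E" "x \<in> V" "y \<in> V" "x \<noteq> y"
  shows "Rk 1 V E x y = {x,y} \<union> {z\<in>V. z \<noteq> x \<and> z \<noteq> y \<and> \<not> (E x z \<longleftrightarrow> E y z)}"
proof -
  have "\<And>z. z \<in> V \<Longrightarrow> z \<in> Rk 1 V E x y \<longleftrightarrow> tdist 1 E x z \<noteq> tdist 1 E y z"
    unfolding Rk_def by blast
  then show ?thesis using assms
    by (auto simp: tdist_char1[OF assms(1)] simpleE[OF assms(1)] Rk_def split: if_splits)
qed




definition tw :: "'a set \<Rightarrow> ('a \<Rightarrow> 'a \<Rightarrow> bool) \<Rightarrow> 'a \<Rightarrow> 'a \<Rightarrow> bool" where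
  "tw V E x y \<longleftrightarrow> (\<forall>z\<in>V. z \<noteq> x \<longrightarrow> z \<noteq> y \<longrightarrow> (E x z \<longleftrightarrow> E y z))"

lemma Rk_twin:
  assumes "connected_graph V E" "x \<in> V" "y \<in> V" "x \<noteq> y" "tw V E x y"
  shows "Rk 1 V E x y = {x,y}"
  using assms Rk_char[OF assms(1-4)] unfolding tw_def by auto

lemma Rk_sub:
  assumes "connected_graph V E" "x \<in> V" "y \<in> V" "x \<noteq> y"
  shows "{x,y} \<subseteq> Rk 1 V E x y"
  using Rk_char[OF assms] by auto

lemma class_bound:
  fixes h :: "'a \<Rightarrow> real"
  assumes "finite C" "card C \<ge> 2" "\<forall>x\<in>C. \<forall>y\<in>C. x \<noteq> y \<longrightarrow> h x + h y \<ge> 1"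
  shows "sum h C \<ge> real (card C) / 2"
proof (cases "\<forall>x\<in>C. h x \<ge> 1/2")
  case True
  then have "sum (\<lambda>_. 1/2) C \<le> sum h C" by (intro sum_mono) auto
  then show ?thesis by simp
next
  case False
  then obtain a where a: "a \<in> C" "h a < 1/2" by auto
  have "sum h C = h a + sum h (C - {a})" using a assms(1) by (simp add: sum.remove)
  moreover have "sum (\<lambda>_. 1 - h a) (C - {a}) \<le> sum h (C - {a})"
    using assms(3) a by (intro sum_mono) (smt (verit) DiffE insertI1)
  moreover have "sum (\<lambda>_. 1 - h a) (C - {a}) = (real (card C) - 1) * (1 - h a)"
    using a assms(1,2) by (simp add: card_Diff_singleton of_nat_diff)
  moreover have "(real (card C) - 2) * (1 - h a) \<ge> (real (card C) - 2) * (1/2)"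
    using a assms(2) by (intro mult_left_mono) auto
  ultimately show ?thesis by (simp add: algebra_simps)
qed




lemma blowup_lower:
  fixes h :: "'a \<Rightarrow> real"
  assumes G: "connected_graph V E" and bl: "in_blowup_family V E"
    and hr: "trunc_resolving_fun 1 V E h"
  shows "sum h V \<ge> real (card V) / 2"
proof -
  obtain W F and \<pi> :: "'a \<Rightarrow> nat" where
    W: "connected_graph W F" "\<pi> ` V = W"
    and fib: "\<forall>u\<in>W. card {x\<in>V. \<pi> x = u} \<ge> 2
          \<and> ((\<forall>x\<in>V. \<forall>y\<in>V. \<pi> x = u \<and> \<pi> y = u \<and> x \<noteq> y \<longrightarrow> E x y)
             \<or> (\<forall>x\<in>V. \<forall>y\<in>V. \<pi> x = u \<and> \<pi> y = u \<longrightarrow> \<not> E x y))"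
    and cr: "\<forall>x\<in>V. \<forall>y\<in>V. \<pi> x \<noteq> \<pi> y \<longrightarrow> (E x y \<longleftrightarrow> F (\<pi> x) (\<pi> y))"
    using bl unfolding in_blowup_family_def by blast
  have fin: "finite V" using simpleE[OF G] by blast
  have finW: "finite W" using W(2) fin by blast
  have twin: "tw V E x y" if "x \<in> V" "y \<in> V" "x \<noteq> y" "\<pi> x = \<pi> y" for x y
    unfolding tw_def
  proof (intro ballI impI)
    fix z assume z: "z \<in> V" "z \<noteq> x" "z \<noteq> y"
    show "E x z \<longleftrightarrow> E y z"
    proof (cases "\<pi> z = \<pi> x")
      case True
      have "\<pi> x \<in> W" using W(2) that by blast
      then show ?thesis using fib that z True by metis
    next
      case False
      then show ?thesis using cr that z by metis
    qed
  qed
  have cb: "sum h {x\<in>V. \<pi> x = u} \<ge> real (card {x\<in>V. \<pi> x = u}) / 2" if u: "u \<in> W" for u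
  proof (rule class_bound)
    show "finite {x \<in> V. \<pi> x = u}" using fin by simp
    show "2 \<le> card {x \<in> V. \<pi> x = u}" using fib u by blast
    show "\<forall>x\<in>{x \<in> V. \<pi> x = u}. \<forall>y\<in>{x \<in> V. \<pi> x = u}. x \<noteq> y \<longrightarrow> 1 \<le> h x + h y"
    proof (intro ballI impI)
      fix x y assume xy: "x \<in> {x \<in> V. \<pi> x = u}" "y \<in> {x \<in> V. \<pi> x = u}" "x \<noteq> y"
      then have "Rk 1 V E x y = {x,y}" using Rk_twin[OF G] twin by auto
      moreover have "sum h (Rk 1 V E x y) \<ge> 1" using hr xy unfolding trunc_resolving_fun_def by auto
      ultimately show "1 \<le> h x + h y" using xy by simp
    qed
  qed
  have "sum h V = (\<Sum>u\<in>W. sum h {x\<in>V. \<pi> x = u})"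
    using sum.group[OF fin finW, of \<pi> h] W(2) by simp
  also have "\<dots> \<ge> (\<Sum>u\<in>W. real (card {x\<in>V. \<pi> x = u}) / 2)"
    using cb by (intro sum_mono) auto
  also have "(\<Sum>u\<in>W. real (card {x\<in>V. \<pi> x = u}) / 2) = (\<Sum>u\<in>W. sum (\<lambda>_. 1::real) {x\<in>V. \<pi> x = u}) / 2"
    by (simp add: sum_divide_distrib)
  also have "(\<Sum>u\<in>W. sum (\<lambda>_. 1::real) {x\<in>V. \<pi> x = u}) = sum (\<lambda>_. 1::real) V"
    using sum.group[OF fin finW, of \<pi> "\<lambda>_. 1::real"] W(2) by simp
  finally show ?thesis by simp
qed

lemma dim_upper_half:
  assumes G: "connected_graph V E"
  shows "trunc_resolving_fun 1 V E (\<lambda>_. 1/2)"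
  unfolding trunc_resolving_fun_def
proof (intro conjI ballI impI)
  fix x y assume xy: "x \<in> V" "y \<in> V" "x \<noteq> y"
  have "sum (\<lambda>_. 1/2::real) {x,y} \<le> sum (\<lambda>_. 1/2) (Rk 1 V E x y)"
    using Rk_sub[OF G xy] simpleE(4)[OF G] by (intro sum_mono2) (auto simp: Rk_def)
  then show "1 \<le> sum (\<lambda>_. 1/2::real) (Rk 1 V E x y)" using xy by simp
qed auto

lemma dim_eq_if_blowup:
  assumes G: "connected_graph V E" and bl: "in_blowup_family V E"
  shows "frac_trunc_dim 1 V E = real (card V) / 2"
  unfolding frac_trunc_dim_def
proof (rule cInf_eq_minimum)
  show "real (card V) / 2 \<in> {sum h V |h. trunc_resolving_fun 1 V E h}"
    using dim_upper_half[OF G] by (intro CollectI exI[of _ "\<lambda>_. 1/2"]) auto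
next
  fix s assume "s \<in> {sum h V |h. trunc_resolving_fun 1 V E h}"
  then show "real (card V) / 2 \<le> s" using blowup_lower[OF G bl] by auto
qed




lemma nontwin_lower:
  assumes G: "connected_graph V E" and v: "v \<in> V" and nt: "\<forall>y\<in>V. y \<noteq> v \<longrightarrow> \<not> tw V E v y"
    and c2: "card V \<ge> 2"
  shows "frac_trunc_dim 1 V E < real (card V) / 2"
proof -
  define h where "h = (\<lambda>z. if z = v then 0 else 1/2::real)"
  have fin: "finite V" using simpleE[OF G] by blast
  have pair: "1 \<le> sum h (Rk 1 V E x y)" if xy: "x \<in> V" "y \<in> V" "x \<noteq> y" for x y
  proof -
    have fR: "finite (Rk 1 V E x y)" using fin by (simp add: Rk_def)
    have hnn: "\<forall>z. h z \<ge> 0" by (simp add: h_def)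
    show ?thesis
    proof (cases "x = v \<or> y = v")
      case False
      have "sum h {x,y} \<le> sum h (Rk 1 V E x y)"
        using Rk_sub[OF G xy] fR hnn by (intro sum_mono2) auto
      then show ?thesis using False xy by (simp add: h_def)
    next
      case True
      then obtain w where w: "w \<in> V" "w \<noteq> v" "{x,y} = {v,w}" using xy by auto
      then obtain z where z: "z \<in> V" "z \<noteq> v" "z \<noteq> w" "\<not> (E v z \<longleftrightarrow> E w z)"
        using nt unfolding tw_def by blast
      have "z \<in> Rk 1 V E x y" using Rk_char[OF G xy] z w by (auto simp: doubleton_eq_iff)
      moreover have "w \<in> Rk 1 V E x y" using Rk_sub[OF G xy] w by auto
      ultimately have "sum h {w,z} \<le> sum h (Rk 1 V E x y)"
        using fR hnn by (intro sum_mono2) auto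
      then show ?thesis using z w by (simp add: h_def)
    qed
  qed
  have hr: "trunc_resolving_fun 1 V E h"
    unfolding trunc_resolving_fun_def using pair by (auto simp: h_def)
  have "sum h V = h v + sum h (V - {v})" using v fin by (simp add: sum.remove)
  also have "\<dots> = (real (card V) - 1) / 2"
    using v fin c2 by (simp add: h_def card_Diff_singleton of_nat_diff)
  finally have sv: "sum h V = (real (card V) - 1) / 2" .
  have "frac_trunc_dim 1 V E \<le> sum h V"
    unfolding frac_trunc_dim_def
  proof (rule cInf_lower)
    show "sum h V \<in> {sum h V |h. trunc_resolving_fun 1 V E h}" using hr by blast
    show "bdd_below {sum h V |h. trunc_resolving_fun 1 V E h}"
      unfolding bdd_below_def trunc_resolving_fun_def
      by (intro exI[of _ 0]) (auto intro: sum_nonneg)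
  qed
  then show ?thesis using sv by simp
qed




lemma walk_map_rtranclp:
  assumes "walk_of_len E x y n" "\<And>a b. E a b \<Longrightarrow> R\<^sup>*\<^sup>* (g a) (g b)"
  shows "R\<^sup>*\<^sup>* (g x) (g y)"
proof -
  obtain xs where xs: "length xs = Suc n" "hd xs = x" "last xs = y" "\<forall>i<n. E (xs ! i) (xs ! Suc i)"
    using assms(1) unfolding walk_of_len_def by blast
  have "\<forall>i\<le>n. R\<^sup>*\<^sup>* (g (xs ! 0)) (g (xs ! i))"
  proof (intro allI impI)
    fix i assume "i \<le> n"
    then show "R\<^sup>*\<^sup>* (g (xs ! 0)) (g (xs ! i))"
    proof (induction i)
      case 0 then show ?case by simp
    next
      case (Suc i)
      then have "R\<^sup>*\<^sup>* (g (xs ! i)) (g (xs ! Suc i))" using xs(4) assms(2) by simp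
      then show ?case using Suc by (meson Suc_leD rtranclp_trans)
    qed
  qed
  moreover have "xs ! 0 = x" using xs by (cases xs) auto
  moreover have "xs ! n = y" using xs by (metis last_conv_nth diff_Suc_1 list.size(3) nat.distinct(1))
  ultimately show ?thesis by auto
qed

lemma rtranclp_walk:
  assumes "R\<^sup>*\<^sup>* a b"
  shows "\<exists>n. walk_of_len R a b n"
  using assms
proof (induction rule: rtranclp_induct)
  case base
  then show ?case using walk0 by metis
next
  case (step y z)
  then obtain n xs where xs: "length xs = Suc n" "hd xs = a" "last xs = y" "\<forall>i<n. R (xs ! i) (xs ! Suc i)"
    unfolding walk_of_len_def by blast
  have "length (xs @ [z]) = Suc (Suc n)" using xs by simp
  moreover have "hd (xs @ [z]) = a" using xs by (cases xs) auto
  moreover have "last (xs @ [z]) = z" by simp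
  moreover have "\<forall>i<Suc n. R ((xs @ [z]) ! i) ((xs @ [z]) ! Suc i)"
  proof (intro allI impI)
    fix i assume i: "i < Suc n"
    show "R ((xs @ [z]) ! i) ((xs @ [z]) ! Suc i)"
    proof (cases "i < n")
      case True then show ?thesis using xs by (simp add: nth_append)
    next
      case False
      then have "i = n" using i by simp
      moreover have "xs ! n = y" using xs by (metis last_conv_nth diff_Suc_1 list.size(3) nat.distinct(1))
      ultimately show ?thesis using xs step by (simp add: nth_append)
    qed
  qed
  ultimately show ?case unfolding walk_of_len_def by blast
qed




lemma tw_refl: "tw V E x x" unfolding tw_def by auto

lemma tw_sym: "tw V E x y \<Longrightarrow> tw V E y x" unfolding tw_def by auto

lemma tw_trans:
  assumes G: "connected_graph V E" and "x \<in> V" "b \<in> V" "y \<in> V" "tw V E x b" "tw V E b y"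
  shows "tw V E x y"
  unfolding tw_def
proof (intro ballI impI)
  fix z assume z: "z \<in> V" "z \<noteq> x" "z \<noteq> y"
  show "E x z \<longleftrightarrow> E y z"
  proof (cases "z = b")
    case False
    then show ?thesis using assms z unfolding tw_def by blast
  next
    case True
    show ?thesis
    proof (cases "x = y")
      case False
      have "y \<noteq> b" "x \<noteq> b" using z True by auto
      have "E x y \<longleftrightarrow> E b y" using assms(5) \<open>y \<in> V\<close> False \<open>y \<noteq> b\<close> unfolding tw_def by auto
      moreover have "E b x \<longleftrightarrow> E y x" using assms(6) \<open>x \<in> V\<close> False \<open>x \<noteq> b\<close> unfolding tw_def by auto
      ultimately show ?thesis using True simpleE(2)[OF G] by blast
    qed simp
  qed
qed

lemma twins_blowup:
  assumes G: "connected_graph V E" and all: "\<forall>v\<in>V. \<exists>y\<in>V. y \<noteq> v \<and> tw V E v y"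
  shows "in_blowup_family V E"
proof -
  have fin: "finite V" using simpleE[OF G] by blast
  obtain enc :: "'a \<Rightarrow> nat" where enc: "inj_on enc V"
    using finite_imp_inj_to_nat_seg[OF fin] by blast
  define rep where "rep x = (SOME c. c \<in> V \<and> tw V E x c)" for x
  define \<pi> where "\<pi> x = enc (rep x)" for x
  have rep: "rep x \<in> V \<and> tw V E x (rep x)" if "x \<in> V" for x
    unfolding rep_def by (rule someI[of _ x]) (use that tw_refl in auto)
  have pi_iff: "\<pi> x = \<pi> y \<longleftrightarrow> tw V E x y" if "x \<in> V" "y \<in> V" for x y
  proof
    assume "\<pi> x = \<pi> y"
    then have "rep x = rep y" using enc rep that unfolding \<pi>_def inj_on_def by blast
    then have "tw V E (rep x) y" using rep[OF that(2)] tw_sym[of V E y "rep y"] by simp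
    then show "tw V E x y" using rep[OF that(1)] tw_trans[OF G, of x "rep x" y] that by blast
  next
    assume "tw V E x y"
    then have yx: "tw V E y x" by (rule tw_sym)
    have "tw V E x c \<longleftrightarrow> tw V E y c" if "c \<in> V" for c
      using tw_trans[OF G, of y x c] tw_trans[OF G, of x y c] yx \<open>tw V E x y\<close> that
        \<open>x \<in> V\<close> \<open>y \<in> V\<close> by blast
    then have "(\<lambda>c. c \<in> V \<and> tw V E x c) = (\<lambda>c. c \<in> V \<and> tw V E y c)" by auto
    then show "\<pi> x = \<pi> y" by (simp add: \<pi>_def rep_def)
  qed
  
  have same: "E x y \<longleftrightarrow> E x' y'" if "x \<in> V" "y \<in> V" "x' \<in> V" "y' \<in> V" "x \<noteq> y" "x' \<noteq> y'"
    "\<pi> x = \<pi> y" "\<pi> x' = \<pi> x" "\<pi> y' = \<pi> x" for x y x' y'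
  proof -
    have t: "tw V E a b" if "a \<in> {x,y,x',y'}" "b \<in> {x,y,x',y'}" for a b
    proof -
      have "a \<in> V" "b \<in> V" "\<pi> a = \<pi> x" "\<pi> b = \<pi> x"
        using that \<open>x \<in> V\<close> \<open>y \<in> V\<close> \<open>x' \<in> V\<close> \<open>y' \<in> V\<close>
          \<open>\<pi> x = \<pi> y\<close> \<open>\<pi> x' = \<pi> x\<close> \<open>\<pi> y' = \<pi> x\<close> by auto
      then show ?thesis using pi_iff by metis
    qed
    show ?thesis
    proof (cases "x' = y")
      case True
      show ?thesis
      proof (cases "y' = x")
        case True2: True
        then show ?thesis using True simpleE(2)[OF G, of x y] simpleE(2)[OF G, of y x] by blast
      next
        case False2: False
        have "E x y \<longleftrightarrow> E y' y" using t[of x y'] False2 True \<open>x \<noteq> y\<close> \<open>x' \<noteq> y'\<close> \<open>y \<in> V\<close>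
          unfolding tw_def by auto
        then show ?thesis using True simpleE(2)[OF G, of y y'] simpleE(2)[OF G, of y' y] by blast
      qed
    next
      case False
      have 1: "E x y \<longleftrightarrow> E x' y" using t[of x x'] False \<open>x \<noteq> y\<close> \<open>y \<in> V\<close> unfolding tw_def by auto
      have 2: "E y x' \<longleftrightarrow> E y' x'" using t[of y y'] False \<open>x' \<noteq> y'\<close> \<open>x' \<in> V\<close> unfolding tw_def by auto
      show ?thesis using 1 2 simpleE(2)[OF G, of x' y] simpleE(2)[OF G, of y x']
          simpleE(2)[OF G, of x' y'] simpleE(2)[OF G, of y' x'] by blast
    qed
  qed
  define W where "W = \<pi> ` V"
  define F where "F a b = (\<exists>x\<in>V. \<exists>y\<in>V. \<pi> x = a \<and> \<pi> y = b \<and> a \<noteq> b \<and> E x y)" for a b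
  have cross: "E x y \<longleftrightarrow> F (\<pi> x) (\<pi> y)" if "x \<in> V" "y \<in> V" "\<pi> x \<noteq> \<pi> y" for x y
  proof
    assume "E x y" then show "F (\<pi> x) (\<pi> y)" using that unfolding F_def by blast
  next
    assume "F (\<pi> x) (\<pi> y)"
    then obtain x' y' where xy': "x' \<in> V" "y' \<in> V" "\<pi> x' = \<pi> x" "\<pi> y' = \<pi> y" "E x' y'"
      unfolding F_def by blast
    have tx: "tw V E x' x" using xy' that pi_iff by auto
    have ty: "tw V E y' y" using xy' that pi_iff by auto
    have "x \<noteq> y'" "x' \<noteq> y'" "y \<noteq> x" using xy' that by auto
    then have "E x y'" using tx xy' unfolding tw_def by auto
    then have "E y' x" using simpleE(2)[OF G] by blast
    then have "E y x" using ty \<open>x \<noteq> y'\<close> \<open>y \<noteq> x\<close> that unfolding tw_def by auto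
    then show "E x y" using simpleE(2)[OF G] by blast
  qed
  have conn: "connected_graph W F"
    unfolding connected_graph_def simple_graph_def
  proof (intro conjI allI impI ballI)
    show "finite W" using fin W_def by simp
    show "W \<noteq> {}" using G W_def unfolding connected_graph_def by auto
    fix a b
    show "F a b \<Longrightarrow> a \<in> W" "F a b \<Longrightarrow> b \<in> W" unfolding F_def W_def by auto
    show "F a b \<Longrightarrow> F b a" unfolding F_def using simpleE(2)[OF G] by metis
    show "\<not> F a a" unfolding F_def by blast
  next
    fix a b assume ab: "a \<in> W" "b \<in> W"
    then obtain x y where xy: "x \<in> V" "y \<in> V" "a = \<pi> x" "b = \<pi> y" unfolding W_def by blast
    obtain n where "walk_of_len E x y n" using G xy unfolding connected_graph_def by blast
    then have "F\<^sup>*\<^sup>* (\<pi> x) (\<pi> y)"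
    proof (rule walk_map_rtranclp)
      fix c d assume "E c d"
      then have cd: "c \<in> V" "d \<in> V" using simpleE(1)[OF G] by auto
      show "F\<^sup>*\<^sup>* (\<pi> c) (\<pi> d)"
      proof (cases "\<pi> c = \<pi> d")
        case False
        then show ?thesis using cross[OF cd False] \<open>E c d\<close> by auto
      qed simp
    qed
    then show "\<exists>n. walk_of_len F a b n" using rtranclp_walk xy by metis
  qed
  show ?thesis
    unfolding in_blowup_family_def
  proof (intro exI conjI)
    show "connected_graph W F" by (rule conn)
    show "\<pi> ` V = W" by (simp add: W_def)
    show "\<forall>x\<in>V. \<forall>y\<in>V. \<pi> x \<noteq> \<pi> y \<longrightarrow> E x y = F (\<pi> x) (\<pi> y)" using cross by blast
    show "\<forall>u\<in>W. 2 \<le> card {x \<in> V. \<pi> x = u} \<and>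
        ((\<forall>x\<in>V. \<forall>y\<in>V. \<pi> x = u \<and> \<pi> y = u \<and> x \<noteq> y \<longrightarrow> E x y) \<or>
         (\<forall>x\<in>V. \<forall>y\<in>V. \<pi> x = u \<and> \<pi> y = u \<longrightarrow> \<not> E x y))"
    proof (intro ballI conjI)
      fix u assume "u \<in> W"
      then obtain x where x: "x \<in> V" "\<pi> x = u" unfolding W_def by blast
      then obtain y where y: "y \<in> V" "y \<noteq> x" "tw V E x y" using all by blast
      have "\<pi> y = u" using pi_iff[of x y] x y by auto
      then have "{x,y} \<subseteq> {x \<in> V. \<pi> x = u}" using x y by auto
      then have "card {x,y} \<le> card {x \<in> V. \<pi> x = u}" by (intro card_mono) (use fin in auto)
      then show "2 \<le> card {x \<in> V. \<pi> x = u}" using y by simp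
      show "(\<forall>x\<in>V. \<forall>y\<in>V. \<pi> x = u \<and> \<pi> y = u \<and> x \<noteq> y \<longrightarrow> E x y) \<or>
         (\<forall>x\<in>V. \<forall>y\<in>V. \<pi> x = u \<and> \<pi> y = u \<longrightarrow> \<not> E x y)"
      proof (cases "\<exists>a\<in>V. \<exists>b\<in>V. \<pi> a = u \<and> \<pi> b = u \<and> a \<noteq> b \<and> E a b")
        case True
        then obtain a b where ab: "a \<in> V" "b \<in> V" "\<pi> a = u" "\<pi> b = u" "a \<noteq> b" "E a b" by blast
        have "\<forall>x\<in>V. \<forall>y\<in>V. \<pi> x = u \<and> \<pi> y = u \<and> x \<noteq> y \<longrightarrow> E x y"
        proof (intro ballI impI)
          fix x y assume "x \<in> V" "y \<in> V" "\<pi> x = u \<and> \<pi> y = u \<and> x \<noteq> y"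
          then show "E x y" using same[of a b x y] ab by auto
        qed
        then show ?thesis by blast
      next
        case False
        then show ?thesis using simpleE(3)[OF G] by metis
      qed
    qed
  qed
qed


theorem theorem2p8:
  fixes V :: "'a set" and E :: "'a \<Rightarrow> 'a \<Rightarrow> bool"
  assumes "connected_graph V E" and "card V \<ge> 2"
  shows "frac_trunc_dim 1 V E = real (card V) / 2 \<longleftrightarrow> in_blowup_family V E"
proof
  assume d: "frac_trunc_dim 1 V E = real (card V) / 2"
  show "in_blowup_family V E"
  proof (rule twins_blowup[OF assms(1)], rule ccontr)
    assume "\<not> (\<forall>v\<in>V. \<exists>y\<in>V. y \<noteq> v \<and> tw V E v y)"
    then obtain v where "v \<in> V" "\<forall>y\<in>V. y \<noteq> v \<longrightarrow> \<not> tw V E v y" by blast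
    from nontwin_lower[OF assms(1) this assms(2)] d show False by simp
  qed
next
  assume "in_blowup_family V E"
  then show "frac_trunc_dim 1 V E = real (card V) / 2" by (rule dim_eq_if_blowup[OF assms(1)])
qed

end
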